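(* Let $n$ be even and let $g\in\mathbb{R}^n$, with order statistics $g_{(1)}\le g_{(2)}\le\dots\le g_{(n)}$. Let $\mathcal{S}\subseteq\{1,\dots,n\}$ be a solution of $$\max_{S\subseteq\{1,\dots,n\}}\ \sum_{i\in S} g_i\quad\text{subject to}\quad \sum_{i\in S} g_i\le\tfrac12\sum_{i=1}^n g_i,\quad |S|=\tfrac n2 .$$ Then $$\Big(\sum_{i\in\mathcal{S}}g_i-\sum_{i\in\mathcal{S}^c}g_i\Big)^2\le\sum_{i=1}^{n/2}\big(g_{(2i)}-g_{(2i-1)}\big)^2 .$$
   Context: In the paper $g_i=\mathbb{E}[Y_i(1)+Y_i(0)\mid X_i]$ for units with covariates $X_i$ and potential outcomes $Y_i(1),Y_i(0)$; the left side (divided by $n^2$) is the design-dependent part of the conditional variance of the IPW estimator under the design that assigns treatment $Z^*\sim\mathrm{Bern}(1/2)$ to all of $\mathcal{S}$ and $1-Z^*$ to all of $\mathcal{S}^c$, and the right side (divided by $n^2$) is the corresponding term for the matched-pair design pairing consecutive units sorted by $g$. $\mathcal{S}^c$ denotes the complement of $\mathcal{S}$ in $\{1,\dots,n\}$. *)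

theory Defs
  imports Complex_Main
begin

definition order_stat :: "(nat \<Rightarrow> real) \<Rightarrow> nat \<Rightarrow> nat \<Rightarrow> real" where
  "order_stat g n k = sort (map g [1..<n+1]) ! (k - 1)"

end

theory Submission imports Defs "HOL-Combinatorics.List_Permutation" begin
lemma pair_split:
  fixes h :: "nat \<Rightarrow> real"
  shows "\<exists>T. T \<subseteq> {..<2*m} \<and> card T = m \<and>
    (sum h T - sum h ({..<2*m} - T))\<^sup>2 \<le> (\<Sum>i<m. (h(2*i+1) - h(2*i))\<^sup>2)"
proof (induction m)
  case 0
  then show ?case by auto
next
  case (Suc m)
  then obtain T where T: "T \<subseteq> {..<2*m}" "card T = m"
    and D: "(sum h T - sum h ({..<2*m} - T))\<^sup>2 \<le> (\<Sum>i<m. (h(2*i+1) - h(2*i))\<^sup>2)" by blast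
  define D where "D = sum h T - sum h ({..<2*m} - T)"
  define e where "e = h(2*m+1) - h(2*m)"
  have fin: "finite T" using T(1) finite_subset by blast
  have n1: "2*m \<notin> T" "2*m+1 \<notin> T" using T(1) by auto
  have r: "(\<Sum>i<Suc m. (h(2*i+1) - h(2*i))\<^sup>2) = (\<Sum>i<m. (h(2*i+1) - h(2*i))\<^sup>2) + e\<^sup>2"
    by (simp add: e_def)
  show ?case
  proof (cases "D * e \<le> 0")
    case True
    let ?T = "insert (2*m+1) T"
    have c: "{..<2*Suc m} - ?T = insert (2*m) ({..<2*m} - T)" using T(1) by auto
    have "sum h ?T - sum h ({..<2*Suc m} - ?T) = D + e"
      unfolding c using fin n1 by (simp add: D_def e_def)
    moreover have "(D+e)\<^sup>2 \<le> D\<^sup>2 + e\<^sup>2" using True by (simp add: power2_eq_square algebra_simps)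
    moreover have "?T \<subseteq> {..<2*Suc m}" using T by auto
    moreover have "card ?T = Suc m" using T fin n1 by simp
    moreover have "D\<^sup>2 \<le> (\<Sum>i<m. (h(2*i+1) - h(2*i))\<^sup>2)" using D unfolding D_def .
    ultimately show ?thesis unfolding r by (intro exI[of _ ?T]) simp
  next
    case False
    let ?T = "insert (2*m) T"
    have c: "{..<2*Suc m} - ?T = insert (2*m+1) ({..<2*m} - T)" using T(1) by auto
    have "sum h ?T - sum h ({..<2*Suc m} - ?T) = D - e"
      unfolding c using fin n1 by (simp add: D_def e_def)
    moreover have "(D-e)\<^sup>2 \<le> D\<^sup>2 + e\<^sup>2" using False by (simp add: power2_eq_square algebra_simps)
    moreover have "?T \<subseteq> {..<2*Suc m}" using T by auto
    moreover have "card ?T = Suc m" using T fin n1 by simp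
    moreover have "D\<^sup>2 \<le> (\<Sum>i<m. (h(2*i+1) - h(2*i))\<^sup>2)" using D unfolding D_def .
    ultimately show ?thesis unfolding r by (intro exI[of _ ?T]) simp
  qed
qed

lemma pair_split_neg:
  fixes h :: "nat \<Rightarrow> real"
  shows "\<exists>T. T \<subseteq> {..<2*m} \<and> card T = m \<and> sum h T - sum h ({..<2*m} - T) \<le> 0 \<and>
    (sum h T - sum h ({..<2*m} - T))\<^sup>2 \<le> (\<Sum>i<m. (h(2*i+1) - h(2*i))\<^sup>2)"
proof -
  obtain T where T: "T \<subseteq> {..<2*m}" "card T = m"
    and D: "(sum h T - sum h ({..<2*m} - T))\<^sup>2 \<le> (\<Sum>i<m. (h(2*i+1) - h(2*i))\<^sup>2)"
    using pair_split by blast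
  show ?thesis
  proof (cases "sum h T - sum h ({..<2*m} - T) \<le> 0")
    case True then show ?thesis using T D by blast
  next
    case False
    let ?U = "{..<2*m} - T"
    have "card ?U = m" using T by (simp add: card_Diff_subset finite_subset)
    moreover have "{..<2*m} - ?U = T" using T by auto
    moreover have "?U \<subseteq> {..<2*m}" by blast
    moreover have "(sum h ?U - sum h T)\<^sup>2 = (sum h T - sum h ?U)\<^sup>2" by (simp add: power2_commute)
    ultimately show ?thesis using D False
      by (intro exI[of _ ?U]) simp
  qed
qed

theorem theorem2:
  fixes n :: nat and g :: "nat \<Rightarrow> real" and S :: "nat set"
  assumes "even n"
    and "S \<subseteq> {1..n}"
    and "card S = n div 2"
    and "(\<Sum>i\<in>S. g i) \<le> (1/2) * (\<Sum>i\<in>{1..n}. g i)"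
    and "\<And>T. T \<subseteq> {1..n} \<Longrightarrow> card T = n div 2 \<Longrightarrow>
           (\<Sum>i\<in>T. g i) \<le> (1/2) * (\<Sum>i\<in>{1..n}. g i) \<Longrightarrow>
           (\<Sum>i\<in>T. g i) \<le> (\<Sum>i\<in>S. g i)"
  shows "((\<Sum>i\<in>S. g i) - (\<Sum>i\<in>{1..n} - S. g i))\<^sup>2
         \<le> (\<Sum>i=1..n div 2. (order_stat g n (2*i) - order_stat g n (2*i - 1))\<^sup>2)"
proof -
  define m where "m = n div 2"
  have nm: "n = 2*m" using assms(1) unfolding m_def by simp
  define L where "L = map g [1..<n+1]"
  define xs where "xs = sort L"
  have "xs <~~> L" unfolding xs_def by simp
  then obtain f where f: "bij_betw f {..<length xs} {..<length L}"
    and fx: "\<forall>i<length xs. xs ! i = L ! (f i)"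
    using permutation_Ex_bij by blast
  have len: "length xs = n" "length L = n" unfolding xs_def L_def by auto
  define p where "p k = f k + 1" for k
  have bp: "bij_betw p {..<n} {1..n}"
  proof -
    have "bij_betw Suc {..<n} {1..n}"
      by (simp add: bij_betw_def inj_on_def image_Suc_lessThan)
    moreover have "bij_betw f {..<n} {..<n}" using f len by simp
    ultimately have "bij_betw (Suc \<circ> f) {..<n} {1..n}" using bij_betw_trans by blast
    then show ?thesis unfolding p_def[abs_def] comp_def by simp
  qed
  define h where "h k = xs ! k" for k
  have hp: "h k = g (p k)" if "k < n" for k
  proof -
    have "f k < n" using f len that by (auto simp: bij_betw_def)
    then have "L ! f k = g (f k + 1)" unfolding L_def by (simp del: upt_Suc)
    then show ?thesis using fx len that unfolding h_def p_def by simp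
  qed
  obtain T where T: "T \<subseteq> {..<2*m}" "card T = m"
    and Dn: "sum h T - sum h ({..<2*m} - T) \<le> 0"
    and D2: "(sum h T - sum h ({..<2*m} - T))\<^sup>2 \<le> (\<Sum>i<m. (h(2*i+1) - h(2*i))\<^sup>2)"
    using pair_split_neg[of m h] by blast
  have T': "T \<subseteq> {..<n}" using T nm by simp
  have injp: "inj_on p {..<n}" using bp by (simp add: bij_betw_def)
  define U where "U = p ` T"
  have U1: "U \<subseteq> {1..n}" using bp T' unfolding U_def bij_betw_def by blast
  have U2: "card U = n div 2" unfolding U_def m_def[symmetric]
    using T(2) card_image[OF inj_on_subset[OF injp T']] by simp
  have sU: "sum g U = sum h T"
  proof -
    have "sum g U = sum (g \<circ> p) T" unfolding U_def by (rule sum.reindex[OF inj_on_subset[OF injp T']])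
    also have "\<dots> = sum h T" using hp T' by (intro sum.cong) auto
    finally show ?thesis .
  qed
  have cU: "{1..n} - U = p ` ({..<n} - T)"
  proof -
    have "p ` ({..<n} - T) = p ` {..<n} - p ` T" by (rule inj_on_image_set_diff[OF injp]) (use T' in auto)
    then show ?thesis unfolding U_def using bij_betw_imp_surj_on[OF bp] by simp
  qed
  have sUc: "sum g ({1..n} - U) = sum h ({..<n} - T)"
  proof -
    have "sum g ({1..n} - U) = sum (g \<circ> p) ({..<n} - T)" unfolding cU
      by (rule sum.reindex[OF inj_on_subset[OF injp]]) blast
    also have "\<dots> = sum h ({..<n} - T)" using hp by (intro sum.cong) auto
    finally show ?thesis .
  qed
  have fin: "finite {1..n}" by simp
  have totU: "sum g {1..n} = sum g U + sum g ({1..n} - U)"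
    using sum.subset_diff[OF U1 fin, of g] by simp
  have totS: "sum g {1..n} = sum g S + sum g ({1..n} - S)"
    using sum.subset_diff[OF assms(2) fin, of g] by simp
  have DU: "sum g U - sum g ({1..n} - U) \<le> 0" using Dn sU sUc nm by simp
  have "sum g U \<le> (1/2) * sum g {1..n}" using DU totU by simp
  then have "sum g U \<le> sum g S" using assms(5) U1 U2 by blast
  then have le1: "sum g U - sum g ({1..n} - U) \<le> sum g S - sum g ({1..n} - S)"
    using totU totS by simp
  have le0: "sum g S - sum g ({1..n} - S) \<le> 0" using assms(4) totS by simp
  have "(sum g S - sum g ({1..n} - S))\<^sup>2 \<le> (sum g U - sum g ({1..n} - U))\<^sup>2"
  proof -
    have "\<bar>sum g S - sum g ({1..n} - S)\<bar> \<le> \<bar>sum g U - sum g ({1..n} - U)\<bar>" using le1 le0 by linarith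
    then show ?thesis by (simp only: abs_le_square_iff)
  qed
  also have "\<dots> \<le> (\<Sum>i<m. (h(2*i+1) - h(2*i))\<^sup>2)" using D2 sU sUc nm by simp
  also have "\<dots> = (\<Sum>i=1..n div 2. (order_stat g n (2*i) - order_stat g n (2*i - 1))\<^sup>2)"
  proof -
    have "(\<Sum>i=1..m. (order_stat g n (2*i) - order_stat g n (2*i - 1))\<^sup>2)
       = (\<Sum>i\<in>Suc ` {..<m}. (order_stat g n (2*i) - order_stat g n (2*i - 1))\<^sup>2)"
      by (simp add: image_Suc_lessThan)
    also have "\<dots> = (\<Sum>i<m. (order_stat g n (2*Suc i) - order_stat g n (2*Suc i - 1))\<^sup>2)"
      by (simp add: sum.reindex)
    also have "\<dots> = (\<Sum>i<m. (h(2*i+1) - h(2*i))\<^sup>2)"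
      by (rule sum.cong) (simp_all add: order_stat_def h_def xs_def L_def del: upt_Suc)
    finally show ?thesis unfolding m_def by simp
  qed
  finally show ?thesis .
qed

end
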